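(* For real $r,\omega$ with $\sinh^22r+\sin^22\omega>0$ define $$\rho^{\natural}(r,\omega)=\frac{\cosh2r-\cos2\omega}{\cosh2r+\cos2\omega},$$ and $\theta^{\natural}(r,\omega)$ (mod $2\pi$) by $$\cos\theta^{\natural}=\frac{\sinh^22r-\sin^22\omega}{\sinh^22r+\sin^22\omega},\qquad \sin\theta^{\natural}=\frac{2\sinh2r\sin2\omega}{\sinh^22r+\sin^22\omega}$$ (so that $\tan(\theta^{\natural}/2)=\sin2\omega/\sinh2r$), and for $\phi\in\mathbb{R}$ set $\mathrm{trh}^{\natural}(r,\omega;\phi)=\rho^{\natural}(r,\omega)\cos(\phi+\theta^{\natural}(r,\omega))$. Then for $|r|<1$ and all $i,j\ge0$, uniformly in $\phi$, $$\frac{\partial^{i+j}\,\mathrm{trh}^{\natural}(r,\omega;\phi)}{\partial r^i\partial\omega^j}\ll_{i,j}\frac{\rho^{\natural}(r,\omega)}{(\cosh^22r-\cos^22\omega)^{(i+j)/2}}.$$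
   Context: Note that $\cosh^22r-\cos^22\omega=\sinh^22r+\sin^22\omega$. *)

theory Defs
  imports "HOL-Analysis.Analysis"
begin

definition rho_nat :: "real \<Rightarrow> real \<Rightarrow> real" where
  "rho_nat r w = (cosh (2*r) - cos (2*w)) / (cosh (2*r) + cos (2*w))"

definition theta_nat :: "real \<Rightarrow> real \<Rightarrow> real" where
  "theta_nat r w = (SOME t. 0 \<le> t \<and> t < 2*pi \<and>
      cos t = ((sinh (2*r))^2 - (sin (2*w))^2) / ((sinh (2*r))^2 + (sin (2*w))^2) \<and>
      sin t = 2 * sinh (2*r) * sin (2*w) / ((sinh (2*r))^2 + (sin (2*w))^2))"

definition trh_nat :: "real \<Rightarrow> real \<Rightarrow> real \<Rightarrow> real" where
  "trh_nat r w phi = rho_nat r w * cos (phi + theta_nat r w)"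

definition mixed_pderiv :: "nat \<Rightarrow> nat \<Rightarrow> (real \<Rightarrow> real \<Rightarrow> real) \<Rightarrow> real \<Rightarrow> real \<Rightarrow> real" where
  "mixed_pderiv i j F r w = (deriv ^^ i) (\<lambda>s. (deriv ^^ j) (\<lambda>v. F s v) w) r"

end

theory Submission imports Defs "HOL-Complex_Analysis.Complex_Analysis" "HOL-Computational_Algebra.Polynomial" begin

lemma cosh_Complex: "cosh (Complex r w) = Complex (cosh r * cos w) (sinh r * sin w)"
  by (simp add: cosh_def sinh_def exp_eq_polar complex_eq_iff field_simps)

lemma sinh_Complex: "sinh (Complex r w) = Complex (sinh r * cos w) (cosh r * sin w)"
  by (simp add: cosh_def sinh_def exp_eq_polar complex_eq_iff field_simps)

lemma D_eq: "(sinh (2*(r::real)))^2 + (sin (2*(w::real)))^2 = (cosh (2*r) - cos (2*w)) * (cosh (2*r) + cos (2*w))"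
  using cosh_square_eq[of "2*r"] sin_cos_squared_add[of "2*w"]
  by (simp add: algebra_simps power2_eq_square)

lemma E_pos:
  assumes "(sinh (2*r))^2 + (sin (2*w))^2 > (0::real)"
  shows "cosh (2*r) + cos (2*w) > 0" "cosh (2*r) - cos (2*w) > 0"
proof -
  have a: "cosh (2*r) - cos (2*w) \<ge> 0" using cosh_real_ge_1[of "2*r"] cos_le_one[of "2*w"] by linarith
  have b: "cosh (2*r) + cos (2*w) \<ge> 0" using cosh_real_ge_1[of "2*r"] cos_ge_minus_one[of "2*w"] by linarith
  have "(cosh (2*r) - cos (2*w)) * (cosh (2*r) + cos (2*w)) > 0" using assms D_eq by simp
  then show "cosh (2*r) + cos (2*w) > 0" "cosh (2*r) - cos (2*w) > 0"
    using a b by (auto simp: zero_less_mult_iff)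
qed

lemma normcosh: "(cmod (cosh (Complex r w)))^2 = (cosh (2*r) + cos (2*w)) / 2"
proof -
  have "(cmod (cosh (Complex r w)))^2 = (cosh r * cos w)^2 + (sinh r * sin w)^2"
    by (simp add: cosh_Complex cmod_def)
  also have "\<dots> = (cosh (2*r) + cos (2*w)) / 2"
    unfolding cosh_double cos_double
    using cosh_square_eq[of r] sin_cos_squared_add[of w]
    by algebra
  finally show ?thesis .
qed

lemma tanh_Complex:
  assumes "(sinh (2*r))^2 + (sin (2*w))^2 > (0::real)"
  shows "cosh (Complex r w) \<noteq> 0"
    "tanh (Complex r w) = Complex (sinh (2*r) / (cosh (2*r) + cos (2*w))) (sin (2*w) / (cosh (2*r) + cos (2*w)))"
proof -
  define E where "E = cosh (2*r) + cos (2*w)"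
  have E: "E > 0" using E_pos[OF assms] E_def by simp
  have n2: "(cosh r * cos w)^2 + (sinh r * sin w)^2 = E/2"
    using normcosh[of r w] by (simp add: cosh_Complex cmod_def E_def)
  show "cosh (Complex r w) \<noteq> 0" using normcosh[of r w] E E_def by auto
  have re: "sinh r * cos w * (cosh r * cos w) + cosh r * sin w * (sinh r * sin w) = sinh (2*r) / 2"
    unfolding sinh_double using sin_cos_squared_add[of w] by algebra
  have im: "cosh r * sin w * (cosh r * cos w) - sinh r * cos w * (sinh r * sin w) = sin (2*w) / 2"
    unfolding sin_double using cosh_square_eq[of r] by algebra
  have "Re (tanh (Complex r w)) = sinh (2*r) / E"
    unfolding tanh_def sinh_Complex cosh_Complex Re_divide complex.sel re n2 by simp
  moreover have "Im (tanh (Complex r w)) = sin (2*w) / E"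
    unfolding tanh_def sinh_Complex cosh_Complex Im_divide complex.sel im n2 by simp
  ultimately show "tanh (Complex r w) = Complex (sinh (2*r) / E) (sin (2*w) / E)"
    by (simp add: complex_eq_iff)
qed

lemma theta_props:
  assumes "(sinh (2*r))^2 + (sin (2*w))^2 > (0::real)"
  shows "cos (theta_nat r w) = ((sinh (2*r))^2 - (sin (2*w))^2) / ((sinh (2*r))^2 + (sin (2*w))^2)"
        "sin (theta_nat r w) = 2 * sinh (2*r) * sin (2*w) / ((sinh (2*r))^2 + (sin (2*w))^2)"
proof -
  define aa where "aa = sinh (2*r)"
  define bb where "bb = sin (2*w)"
  have D: "aa^2 + bb^2 > 0" using assms aa_def bb_def by simp
  have "((aa^2 - bb^2)/(aa^2+bb^2))^2 + (2*aa*bb / (aa^2+bb^2))^2 = 1"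
  proof -
    have e: "(aa^2 - bb^2)^2 + (2*aa*bb)^2 = (aa^2+bb^2)^2" by algebra
    have "aa^2+bb^2 \<noteq> 0" using D by linarith
    then show ?thesis by (simp add: power_divide e flip: add_divide_distrib)
  qed
  then obtain t where t: "0 \<le> t" "t < 2*pi" "(aa^2 - bb^2)/(aa^2+bb^2) = cos t" "2*aa*bb / (aa^2+bb^2) = sin t"
    by (rule sincos_total_2pi)
  have "\<exists>t. 0 \<le> t \<and> t < 2*pi \<and> cos t = (aa^2 - bb^2)/(aa^2+bb^2) \<and> sin t = 2*aa*bb / (aa^2+bb^2)"
    using t by metis
  from someI_ex[OF this] show
    "cos (theta_nat r w) = ((sinh (2*r))^2 - (sin (2*w))^2) / ((sinh (2*r))^2 + (sin (2*w))^2)"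
    "sin (theta_nat r w) = 2 * sinh (2*r) * sin (2*w) / ((sinh (2*r))^2 + (sin (2*w))^2)"
    unfolding theta_nat_def aa_def bb_def by auto
qed

lemma trh_eq:
  assumes "(sinh (2*r))^2 + (sin (2*w))^2 > (0::real)"
  shows "trh_nat r w phi = Re (cis phi * (tanh (Complex r w))^2)"
proof -
  define aa where "aa = sinh (2*r)"
  define bb where "bb = sin (2*w)"
  define E where "E = cosh (2*r) + cos (2*w)"
  define F where "F = cosh (2*r) - cos (2*w)"
  have E: "E > 0" "F > 0" using E_pos[OF assms] E_def F_def by auto
  have DE: "aa^2 + bb^2 = F * E" using D_eq[of r w] aa_def bb_def E_def F_def by simp
  have t: "tanh (Complex r w) = Complex (aa/E) (bb/E)" using tanh_Complex(2)[OF assms] aa_def bb_def E_def by simp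
  have "Re (cis phi * (tanh (Complex r w))^2) = cos phi * ((aa/E)^2 - (bb/E)^2) - sin phi * (2 * (aa/E) * (bb /E))"
    unfolding t by (simp add: power2_eq_square algebra_simps)
  also have "\<dots> = F / E * (cos phi * ((aa^2 - bb^2)/(aa^2+bb^2)) - sin phi * (2*aa*bb / (aa^2+bb^2)))"
    unfolding DE using E by (simp add: field_simps power2_eq_square)
  also have "\<dots> = trh_nat r w phi"
    unfolding trh_nat_def rho_nat_def cos_add theta_props[OF assms] aa_def bb_def E_def F_def
    by (simp add: algebra_simps)
  finally show ?thesis by simp
qed

lemma norm_tanh:
  assumes "(sinh (2*r))^2 + (sin (2*w))^2 > (0::real)"
  shows "(cmod (tanh (Complex r w)))^2 = rho_nat r w"
proof -
  define aa where "aa = sinh (2*r)"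
  define bb where "bb = sin (2*w)"
  define E where "E = cosh (2*r) + cos (2*w)"
  define F where "F = cosh (2*r) - cos (2*w)"
  have E: "E > 0" "F > 0" using E_pos[OF assms] E_def F_def by auto
  have DE: "aa^2 + bb^2 = F * E" using D_eq[of r w] aa_def bb_def E_def F_def by simp
  have t: "tanh (Complex r w) = Complex (aa/E) (bb/E)" using tanh_Complex(2)[OF assms] aa_def bb_def E_def by simp
  have "(cmod (tanh (Complex r w)))^2 = (aa^2 + bb^2) / E^2"
    unfolding t cmod_def by (simp add: power_divide add_divide_distrib)
  also have "\<dots> = rho_nat r w" unfolding DE rho_nat_def E_def F_def by (simp add: power2_eq_square)
  finally show ?thesis .
qed

lemma deriv_funpow_cong_open:
  assumes "open S" "\<And>y. y \<in> S \<Longrightarrow> f y = g y"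
  shows "y \<in> S \<Longrightarrow> (deriv ^^ n) f y = (deriv ^^ n) g (y::real)"
proof (induction n arbitrary: y)
  case 0 then show ?case using assms by simp
next
  case (Suc n)
  have "eventually (\<lambda>z. z \<in> S) (nhds y)" using assms(1) Suc.prems by (rule eventually_nhds_in_open)
  then have "eventually (\<lambda>z. (deriv ^^ n) f z = (deriv ^^ n) g z) (nhds y)"
    by (rule eventually_mono) (use Suc.IH in auto)
  then show ?case by (simp add: deriv_cong_ev)
qed

lemma deriv_funpow_cong_ev:
  assumes "eventually (\<lambda>z. f z = g z) (nhds y)"
  shows "(deriv ^^ n) f y = (deriv ^^ n) g (y::real)"
proof -
  obtain S where "open S" "y \<in> S" "\<forall>z\<in>S. f z = g z" using assms unfolding eventually_nhds by blast
  then show ?thesis using deriv_funpow_cong_open[of S f g y n] by blast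
qed

lemma line_deriv:
  fixes G :: "complex \<Rightarrow> complex"
  assumes hol: "G holomorphic_on \<Omega>" and op: "open \<Omega>"
  shows "p + of_real t * q \<in> \<Omega> \<Longrightarrow>
    (deriv ^^ n) (\<lambda>t. Re (c * G (p + of_real t * q))) t = Re (c * q^n * (deriv ^^ n) G (p + of_real t * q))"
proof (induction n arbitrary: t)
  case 0 then show ?case by simp
next
  case (Suc n)
  define Gn where "Gn = (deriv ^^ n) G"
  have holn: "Gn holomorphic_on \<Omega>" unfolding Gn_def using hol op by (rule holomorphic_higher_deriv)
  have lim: "((\<lambda>s. p + of_real s * q) \<longlongrightarrow> p + of_real t * q) (nhds t)"
    by (intro tendsto_intros filterlim_ident)
  have ev: "eventually (\<lambda>s. p + of_real s * q \<in> \<Omega>) (nhds t)"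
    using topological_tendstoD[OF lim op Suc.prems] .
  have ev2: "eventually (\<lambda>s. (deriv ^^ n) (\<lambda>t. Re (c * G (p + of_real t * q))) s
        = Re (c * q^n * Gn (p + of_real s * q))) (nhds t)"
    using ev by (rule eventually_mono) (use Suc.IH Gn_def in auto)
  have dG: "(Gn has_field_derivative deriv Gn (p + of_real t * q)) (at (p + of_real t * q))"
    by (rule holomorphic_derivI[OF holn op Suc.prems])
  have dl: "((\<lambda>x. p + x * q) has_field_derivative q) (at (of_real t))"
    by (auto intro!: derivative_eq_intros)
  have dc: "((\<lambda>x. Gn (p + x * q)) has_field_derivative deriv Gn (p + of_real t * q) * q) (at (of_real t))"
    using DERIV_chain2[where f=Gn and g="\<lambda>x. p + x * q" and x="of_real t" and s=UNIV] dG dl by simp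
  have d1: "((\<lambda>x. c * q^n * Gn (p + x * q)) has_field_derivative
       (c * q^n * (deriv Gn (p + of_real t * q) * q))) (at (of_real t))"
    by (rule DERIV_cmult[OF dc])
  have d2: "((\<lambda>s. Re (c * q^n * Gn (p + of_real s * q))) has_field_derivative
       Re (c * q^n * (deriv Gn (p + of_real t * q) * q))) (at t)"
    by (rule has_field_derivative_Re, rule has_vector_derivative_real_field[OF d1])
  have "(deriv ^^ Suc n) (\<lambda>t. Re (c * G (p + of_real t * q))) t
      = deriv (\<lambda>s. Re (c * q^n * Gn (p + of_real s * q))) t"
    using ev2 by (simp add: deriv_cong_ev)
  also have "\<dots> = Re (c * q^n * (deriv Gn (p + of_real t * q) * q))"
    using d2 by (rule DERIV_imp_deriv)
  also have "\<dots> = Re (c * q^Suc n * (deriv ^^ Suc n) G (p + of_real t * q))"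
    by (simp add: Gn_def algebra_simps)
  finally show ?case .
qed

lemma Complex_line1: "Complex s v = of_real s + of_real v * \<i>"
  by (simp add: complex_eq_iff)
lemma Complex_line2: "Complex s v = Complex 0 v + of_real s * 1"
  by (simp add: complex_eq_iff)
lemma Complex_line3: "Complex 0 v + of_real s = Complex s v"
  by (simp add: complex_eq_iff)

lemma mixed_holo:
  fixes G :: "complex \<Rightarrow> complex"
  assumes hol: "G holomorphic_on \<Omega>" and op: "open \<Omega>" and z: "Complex r w \<in> \<Omega>"
  shows "mixed_pderiv i j (\<lambda>s v. Re (c * G (Complex s v))) r w
         = Re (c * \<i>^j * (deriv ^^ (i+j)) G (Complex r w))"
proof -
  define Gj where "Gj = (deriv ^^ j) G"
  have holj: "Gj holomorphic_on \<Omega>" unfolding Gj_def using hol op by (rule holomorphic_higher_deriv)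
  have inner: "(deriv ^^ j) (\<lambda>v. Re (c * G (Complex s v))) w = Re (c * \<i>^j * Gj (Complex 0 w + of_real s * 1))"
    if "Complex s w \<in> \<Omega>" for s
    using line_deriv[OF hol op, of "of_real s" w "\<i>" j c] that
    unfolding Complex_line1[symmetric] Gj_def by (simp add: Complex_line3)
  have lim: "((\<lambda>s. Complex 0 w + of_real s * 1) \<longlongrightarrow> Complex 0 w + of_real r * 1) (nhds r)"
    by (intro tendsto_intros filterlim_ident)
  have ev: "eventually (\<lambda>s. Complex 0 w + of_real s * 1 \<in> \<Omega>) (nhds r)"
    using topological_tendstoD[OF lim op] z by (simp add: Complex_line3)
  have ev2: "eventually (\<lambda>s. (deriv ^^ j) (\<lambda>v. Re (c * G (Complex s v))) w
        = Re ((c * \<i>^j) * Gj (Complex 0 w + of_real s * 1))) (nhds r)"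
    using ev by (rule eventually_mono) (use inner in \<open>auto simp: Complex_line3\<close>)
  have "mixed_pderiv i j (\<lambda>s v. Re (c * G (Complex s v))) r w
     = (deriv ^^ i) (\<lambda>s. Re ((c * \<i>^j) * Gj (Complex 0 w + of_real s * 1))) r"
    unfolding mixed_pderiv_def using ev2 by (rule deriv_funpow_cong_ev)
  also have "\<dots> = Re ((c * \<i>^j) * 1^i * (deriv ^^ i) Gj (Complex 0 w + of_real r * 1))"
    using line_deriv[OF holj op, of "Complex 0 w" r 1 i "c * \<i>^j"] z
    by (simp add: Complex_line3)
  also have "\<dots> = Re (c * \<i>^j * (deriv ^^ (i+j)) G (Complex r w))"
    by (simp add: Gj_def funpow_add Complex_line3)
  finally show ?thesis .
qed

definition Om :: "complex set" where "Om = {z. cosh z \<noteq> 0}"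

lemma open_Om: "open Om"
  unfolding Om_def by (intro open_Collect_neq continuous_intros)

definition GG :: "complex \<Rightarrow> complex" where "GG z = (tanh z)^2"

lemma dtanh: "cosh z \<noteq> 0 \<Longrightarrow> (tanh has_field_derivative (1 - tanh z ^ 2)) (at z)"
  using has_field_derivative_tanh[where g="\<lambda>x. x" and x=z and s=UNIV, OF _ DERIV_ident] by simp

lemma hol_GG: "GG holomorphic_on Om"
proof -
  have "\<forall>z\<in>Om. \<exists>f'. (GG has_field_derivative f') (at z)"
  proof
    fix z assume "z \<in> Om"
    then have c: "cosh z \<noteq> 0" by (simp add: Om_def)
    from DERIV_power[OF dtanh[OF c], of 2]
    show "\<exists>f'. (GG has_field_derivative f') (at z)" unfolding GG_def by blast
  qed
  then show ?thesis using holomorphic_on_open[OF open_Om] by blast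
qed

fun PP :: "nat \<Rightarrow> complex poly" where
  "PP 0 = [:0,0,1:]"
| "PP (Suc n) = pderiv (PP n) * [:1,0,-1:]"

lemma deg_PP: "degree (PP n) \<le> n + 2"
proof (induction n)
  case 0 then show ?case by simp
next
  case (Suc n)
  have "degree (PP (Suc n)) \<le> degree (pderiv (PP n)) + degree [:1,0,-1::complex:]"
    unfolding PP.simps by (rule degree_mult_le)
  also have "\<dots> \<le> (n + 1) + 2" using Suc by (simp add: degree_pderiv)
  finally show ?case by simp
qed

lemma rep_PP: "z \<in> Om \<Longrightarrow> (deriv ^^ n) GG z = poly (PP n) (tanh z)"
proof (induction n arbitrary: z)
  case 0 then show ?case by (simp add: GG_def power2_eq_square)
next
  case (Suc n)
  have ev: "eventually (\<lambda>y. y \<in> Om) (nhds z)" using open_Om Suc.prems by (rule eventually_nhds_in_open)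
  have "(deriv ^^ Suc n) GG z = deriv (\<lambda>y. poly (PP n) (tanh y)) z"
    using ev by (simp add: deriv_cong_ev eventually_mono Suc.IH)
  also have "\<dots> = poly (pderiv (PP n)) (tanh z) * (1 - tanh z ^ 2)"
  proof (rule DERIV_imp_deriv)
    have c: "cosh z \<noteq> 0" using Suc.prems by (simp add: Om_def)
    show "((\<lambda>y. poly (PP n) (tanh y)) has_field_derivative poly (pderiv (PP n)) (tanh z) * (1 - tanh z ^ 2)) (at z)"
      using DERIV_chain2[where f="poly (PP n)" and g=tanh and x=z and s=UNIV, OF poly_DERIV dtanh[OF c]]
      by simp
  qed
  also have "\<dots> = poly (PP (Suc n)) (tanh z)" by (simp add: algebra_simps power2_eq_square)
  finally show ?case .
qed

lemma poly_bound:
  fixes p :: "complex poly"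
  shows "cmod (poly p x) \<le> (\<Sum>i\<le>degree p. cmod (coeff p i)) * (1 + cmod x)^(degree p)"
proof -
  have "cmod (poly p x) \<le> (\<Sum>i\<le>degree p. cmod (coeff p i * x^i))"
    unfolding poly_altdef by (rule norm_sum)
  also have "\<dots> \<le> (\<Sum>i\<le>degree p. cmod (coeff p i) * (1 + cmod x)^(degree p))"
  proof (rule sum_mono)
    fix i assume "i \<in> {..degree p}"
    then have i: "i \<le> degree p" by simp
    have "cmod x ^ i \<le> (1 + cmod x)^i" by (intro power_mono) auto
    also have "\<dots> \<le> (1 + cmod x)^(degree p)" using i by (intro power_increasing) auto
    finally show "cmod (coeff p i * x^i) \<le> cmod (coeff p i) * (1 + cmod x)^(degree p)"
      by (simp add: norm_mult norm_power mult_left_mono)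
  qed
  also have "\<dots> = (\<Sum>i\<le>degree p. cmod (coeff p i)) * (1 + cmod x)^(degree p)"
    by (simp add: sum_distrib_right)
  finally show ?thesis .
qed

lemma poly_bound_PP:
  "cmod (poly (PP n) x) \<le> (\<Sum>i\<le>degree (PP n). cmod (coeff (PP n) i)) * (1 + cmod x)^(n+2)"
proof -
  have "(1 + cmod x)^(degree (PP n)) \<le> (1 + cmod x)^(n+2)"
    using deg_PP[of n] by (intro power_increasing) auto
  then show ?thesis using poly_bound[of "PP n" x]
    by (meson order_trans mult_left_mono sum_nonneg norm_ge_zero)
qed

lemma mixed_cong:
  assumes T: "open T" and rw: "(r, w) \<in> T" and eq: "\<And>s v. (s, v) \<in> T \<Longrightarrow> F s v = H s v"
  shows "mixed_pderiv i j F r w = mixed_pderiv i j H r w"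
proof -
  obtain e where e: "e > 0" "ball (r, w) e \<subseteq> T" using T rw by (meson openE)
  have inb: "(s, v) \<in> T" if "\<bar>r - s\<bar> < e/2" "\<bar>w - v\<bar> < e/2" for s v
  proof -
    have "dist (r, w) (s, v) \<le> \<bar>r - s\<bar> + \<bar>w - v\<bar>"
      unfolding dist_Pair_Pair dist_real_def using sqrt_sum_squares_le_sum_abs[of "r-s" "w-v"] by simp
    also have "\<dots> < e" using that by linarith
    finally show ?thesis using e by auto
  qed
  have inner: "(deriv ^^ j) (\<lambda>v. F s v) w = (deriv ^^ j) (\<lambda>v. H s v) w" if "\<bar>r - s\<bar> < e/2" for s
    by (rule deriv_funpow_cong_open[of "ball w (e/2)"]) (use e that inb eq in \<open>auto simp: dist_real_def\<close>)
  show ?thesis unfolding mixed_pderiv_def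
    by (rule deriv_funpow_cong_open[of "ball r (e/2)"]) (use e inner in \<open>auto simp: dist_real_def\<close>)
qed

lemma key_ineq:
  fixes t k B K X :: real
  assumes t: "t > 0" and k: "k > 0" and B: "k*(1+t)^2 \<le> B" and n: "2 \<le> n" and K: "K \<ge> 0"
    and X: "X \<le> K*(1+t)^(n+2)"
  shows "X \<le> K*(2*B)^n * t^2 / (2*t*k)^n"
proof -
  obtain m where nm: "n = m+2" using n by (metis add.commute le_Suc_ex)
  have tm: "t^m \<le> (1+t)^m" using t by (intro power_mono) auto
  have tn: "t^n = t^2 * t^m" unfolding nm by (simp only: power_add mult.commute)
  have "(2*t*k)^n = 2^n * t^n * k^n" by (simp add: power_mult_distrib)
  then have "(1+t)^(n+2) * (2*t*k)^n = 2^n * k^n * (t^2 * t^m) * (1+t)^(n+2)"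
    unfolding tn by (simp only: mult_ac)
  also have "\<dots> \<le> 2^n * k^n * (t^2 * (1+t)^m) * (1+t)^(n+2)"
    using tm t k by (intro mult_right_mono mult_left_mono) auto
  also have "\<dots> = 2^n * t^2 * (k*(1+t)^2)^n"
  proof -
    have mn: "m + (n+2) = 2*n" using nm by simp
    have eq: "(1+t)^m * (1+t)^(n+2) = ((1+t)^2)^n"
      by (simp only: power_add[symmetric] power_mult[symmetric] mn)
    have e2: "(k*(1+t)^2)^n = k^n * ((1+t)^2)^n" by (rule power_mult_distrib)
    show ?thesis unfolding e2 eq[symmetric] by (simp only: mult_ac)
  qed
  also have "\<dots> \<le> 2^n * t^2 * B^n"
    using B k t by (intro mult_left_mono power_mono) auto
  finally have a: "(1+t)^(n+2) * (2*t*k)^n \<le> 2^n * t^2 * B^n" .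
  have p: "(2*t*k)^n > 0" using t k by simp
  have "X * (2*t*k)^n \<le> K*(1+t)^(n+2) * (2*t*k)^n"
    using X p by (intro mult_right_mono) auto
  also have "\<dots> \<le> K * (2^n * t^2 * B^n)" using a K by (simp add: mult.assoc mult_left_mono)
  also have "\<dots> = K*(2*B)^n * t^2" by (simp add: power_mult_distrib)
  finally show ?thesis using p by (simp add: pos_le_divide_eq)
qed

lemma one_minus_tanh2: "cosh z \<noteq> 0 \<Longrightarrow> 1 - (tanh z)^2 = 1 / (cosh z)^2" for z :: complex
proof -
  assume c: "cosh z \<noteq> 0"
  have "1 - (tanh z)^2 = ((cosh z)^2 - (sinh z)^2) / (cosh z)^2"
    using c by (simp add: tanh_def field_simps)
  then show ?thesis by (simp add: hyperbolic_pythagoras)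
qed

lemma point_facts:
  assumes r: "\<bar>r\<bar> < 1" and D: "(sinh (2*r))^2 + (sin (2*w))^2 > (0::real)"
  defines "z \<equiv> Complex r w"
  defines "t \<equiv> cmod (tanh z)" and "k \<equiv> (cmod (cosh z))^2"
  shows "t > 0" "k > 0" "t^2 = rho_nat r w" "cosh z \<noteq> 0"
    "\<And>n. ((sinh (2*r))^2 + (sin (2*w))^2) powr (real n / 2) = (2*t*k)^n"
    "cmod (1 - (tanh z)^2) * k = 1"
    "k*(1+t)^2 \<le> 9 * cosh 2"
proof -
  define E where "E = cosh (2*r) + cos (2*w)"
  define F where "F = cosh (2*r) - cos (2*w)"
  have EF: "E > 0" "F > 0" using E_pos[OF D] E_def F_def by auto
  have kE: "k = E/2" unfolding k_def z_def E_def by (rule normcosh)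
  show kp: "k > 0" using kE EF by simp
  show t2: "t^2 = rho_nat r w" unfolding t_def z_def by (rule norm_tanh[OF D])
  have rho: "rho_nat r w = F/E" unfolding rho_nat_def E_def F_def ..
  have "t^2 > 0" using t2 rho EF by simp
  moreover have "t \<ge> 0" unfolding t_def by simp
  ultimately show tp: "t > 0" by (simp add: zero_less_power2)
  show cz: "cosh z \<noteq> 0" unfolding z_def by (rule tanh_Complex(1)[OF D])
  have DD: "(sinh (2*r))^2 + (sin (2*w))^2 = (2*t*k)^2"
  proof -
    have "(2*t*k)^2 = 4 * t^2 * k^2" by (simp add: power_mult_distrib)
    also have "\<dots> = F * E" unfolding t2 rho kE using EF by (simp add: field_simps power2_eq_square)
    finally show ?thesis using D_eq[of r w] E_def F_def by simp
  qed
  show "((sinh (2*r))^2 + (sin (2*w))^2) powr (real n / 2) = (2*t*k)^n" for n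
  proof -
    have pos: "2*t*k > 0" using tp kp by simp
    have "((2*t*k)^2) powr (real n / 2) = ((2*t*k) powr 2) powr (real n / 2)"
      using pos by (simp add: powr_realpow)
    also have "\<dots> = (2*t*k) powr (real n)" by (simp add: powr_powr)
    also have "\<dots> = (2*t*k)^n" using pos by (simp add: powr_realpow)
    finally show ?thesis using DD by simp
  qed
  show ck: "cmod (1 - (tanh z)^2) * k = 1"
    unfolding one_minus_tanh2[OF cz] k_def using cz by (simp add: norm_divide norm_power)
  have kM: "k \<le> cosh 2"
  proof -
    have "cosh (2*r) = cosh \<bar>2*r\<bar>" by simp
    also have "\<dots> \<le> cosh 2" using r by (subst cosh_real_nonneg_le_iff) auto
    finally have "cosh (2*r) \<le> cosh 2" .
    moreover have "cos (2*w) \<le> 1" by simp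
    moreover have "cosh (2::real) \<ge> 1" by (rule cosh_real_ge_1)
    ultimately show ?thesis using kE E_def by linarith
  qed
  have c1: "cosh (2::real) \<ge> 1" by (rule cosh_real_ge_1)
  show "k*(1+t)^2 \<le> 9 * cosh 2"
  proof (cases "t \<ge> 2")
    case True
    have "t^2 - 1 \<le> cmod ((tanh z)^2 - 1)"
      using norm_triangle_ineq2[of "(tanh z)^2" 1] by (simp add: norm_power t_def)
    also have "\<dots> = cmod (1 - (tanh z)^2)" by (rule norm_minus_commute)
    finally have "(t^2 - 1) * k \<le> 1" using ck kp by (metis mult_right_mono less_imp_le)
    then have "k * ((1+t) * (t - 1)) \<le> 1" by (simp add: algebra_simps power2_eq_square)
    then have "k * (1+t) * (t-1) \<le> 1" by (simp add: mult.assoc)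
    moreover have "k * (1+t) * (1+t) \<le> k * (1+t) * (3*(t-1))"
      using True kp tp by (intro mult_left_mono) auto
    moreover have "k * (1+t) * (3*(t-1)) = 3 * (k * (1+t) * (t-1))" by algebra
    moreover have "k*(1+t)^2 = k * (1+t) * (1+t)" by algebra
    ultimately have "k*(1+t)^2 \<le> 3" by linarith
    then show ?thesis using c1 by linarith
  next
    case False
    have "(1+t)^2 \<le> 3^2" using False tp by (intro power_mono) auto
    then have "k*(1+t)^2 \<le> cosh 2 * 9" using kM kp by (intro mult_mono) auto
    then show ?thesis by simp
  qed
qed

lemma core:
  "\<exists>C. \<forall>r w. \<bar>r\<bar> < 1 \<and> (sinh (2*r))^2 + (sin (2*w))^2 > 0 \<longrightarrow>
     cmod ((deriv ^^ n) GG (Complex r w))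
       \<le> C * rho_nat r w / ((sinh (2*r))^2 + (sin (2*w))^2) powr (real n / 2)"
proof -
  define K where "K = (\<Sum>i\<le>degree (PP n). cmod (coeff (PP n) i))"
  define C where "C = (if n = 0 then 1 else if n = 1 then 4 else K * (2 * (9 * cosh (2::real)))^n)"
  show ?thesis
  proof (intro exI allI impI)
    fix r w :: real
    assume a: "\<bar>r\<bar> < 1 \<and> (sinh (2*r))^2 + (sin (2*w))^2 > 0"
    define z where "z = Complex r w"
    define t where "t = cmod (tanh z)"
    define k where "k = (cmod (cosh z))^2"
    note pf = point_facts[of r w, folded z_def, folded t_def k_def, OF conjunct1[OF a] conjunct2[OF a]]
    have zO: "z \<in> Om" using pf(4) by (simp add: Om_def)
    have rep: "(deriv ^^ n) GG z = poly (PP n) (tanh z)" by (rule rep_PP[OF zO])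
    have goal: "cmod ((deriv ^^ n) GG z) \<le> C * t^2 / (2*t*k)^n"
    proof (cases "n \<le> 1")
      case True
      then consider "n = 0" | "n = 1" by linarith
      then show ?thesis
      proof cases
        case 1
        then show ?thesis using rep by (simp add: C_def t_def norm_mult power2_eq_square)
      next
        case 2
        have "poly (PP 1) (tanh z) = 2 * tanh z * (1 - (tanh z)^2)"
          by (simp add: pderiv_pCons algebra_simps power2_eq_square)
        then have "cmod ((deriv ^^ n) GG z) = 2 * t * cmod (1 - (tanh z)^2)"
          using rep 2 by (simp add: norm_mult t_def)
        also have "\<dots> = 2 * t / k" using pf(6) pf(2) by (simp add: field_simps)
        also have "\<dots> = C * t^2 / (2*t*k)^n" using 2 pf(1) pf(2) by (simp add: C_def field_simps power2_eq_square)
        finally show ?thesis by simp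
      qed
    next
      case False
      have K0: "K \<ge> 0" unfolding K_def by (rule sum_nonneg) simp
      have "cmod ((deriv ^^ n) GG z) \<le> K * (1 + t)^(n+2)"
        unfolding rep K_def t_def by (rule poly_bound_PP)
      then have "cmod ((deriv ^^ n) GG z) \<le> K*(2*(9 * cosh 2))^n * t^2 / (2*t*k)^n"
        using key_ineq[OF pf(1) pf(2) pf(7)] False K0 by simp
      then show ?thesis using False by (simp add: C_def)
    qed
    then show "cmod ((deriv ^^ n) GG (Complex r w))
       \<le> C * rho_nat r w / ((sinh (2*r))^2 + (sin (2*w))^2) powr (real n / 2)"
      using pf(3) pf(5) z_def by simp
  qed
qed

theorem mainTheorem7:
  shows "\<forall>i j :: nat. \<exists>C :: real. \<forall>r w phi :: real.
     \<bar>r\<bar> < 1 \<and> (sinh (2*r))^2 + (sin (2*w))^2 > 0 \<longrightarrow>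
     \<bar>mixed_pderiv i j (\<lambda>s v. trh_nat s v phi) r w\<bar>
       \<le> C * rho_nat r w / ((cosh (2*r))^2 - (cos (2*w))^2) powr (real (i + j) / 2)"
proof (intro allI)
  fix i j :: nat
  obtain C where C: "\<forall>r w. \<bar>r\<bar> < 1 \<and> (sinh (2*r))^2 + (sin (2*w))^2 > 0 \<longrightarrow>
     cmod ((deriv ^^ (i+j)) GG (Complex r w))
       \<le> C * rho_nat r w / ((sinh (2*r))^2 + (sin (2*w))^2) powr (real (i+j) / 2)"
    using core[of "i+j"] by blast
  show "\<exists>C :: real. \<forall>r w phi :: real.
     \<bar>r\<bar> < 1 \<and> (sinh (2*r))^2 + (sin (2*w))^2 > 0 \<longrightarrow>
     \<bar>mixed_pderiv i j (\<lambda>s v. trh_nat s v phi) r w\<bar>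
       \<le> C * rho_nat r w / ((cosh (2*r))^2 - (cos (2*w))^2) powr (real (i + j) / 2)"
  proof (intro exI allI impI)
    fix r w phi :: real
    assume a: "\<bar>r\<bar> < 1 \<and> (sinh (2*r))^2 + (sin (2*w))^2 > 0"
    define T where "T = {p :: real \<times> real. 0 < (sinh (2 * fst p))^2 + (sin (2 * snd p))^2}"
    have oT: "open T" unfolding T_def by (intro open_Collect_less continuous_intros)
    have rwT: "(r, w) \<in> T" using a T_def by simp
    have "mixed_pderiv i j (\<lambda>s v. trh_nat s v phi) r w
        = mixed_pderiv i j (\<lambda>s v. Re (cis phi * GG (Complex s v))) r w"
      by (rule mixed_cong[OF oT rwT]) (simp add: T_def trh_eq GG_def)
    also have "\<dots> = Re (cis phi * \<i>^j * (deriv ^^ (i+j)) GG (Complex r w))"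
    proof (rule mixed_holo[OF hol_GG open_Om])
      show "Complex r w \<in> Om" using tanh_Complex(1)[of r w] a by (simp add: Om_def)
    qed
    finally have eq: "mixed_pderiv i j (\<lambda>s v. trh_nat s v phi) r w
        = Re (cis phi * \<i>^j * (deriv ^^ (i+j)) GG (Complex r w))" .
    have "\<bar>mixed_pderiv i j (\<lambda>s v. trh_nat s v phi) r w\<bar>
        \<le> cmod (cis phi * \<i>^j * (deriv ^^ (i+j)) GG (Complex r w))"
      unfolding eq by (rule abs_Re_le_cmod)
    also have "\<dots> = cmod ((deriv ^^ (i+j)) GG (Complex r w))"
      by (simp add: norm_mult norm_power)
    also have "\<dots> \<le> C * rho_nat r w / ((sinh (2*r))^2 + (sin (2*w))^2) powr (real (i+j) / 2)"
      using C a by blast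
    also have "(sinh (2*r))^2 + (sin (2*w))^2 = (cosh (2*r))^2 - (cos (2*w))^2"
      using D_eq[of r w] by (simp add: algebra_simps power2_eq_square)
    finally show "\<bar>mixed_pderiv i j (\<lambda>s v. trh_nat s v phi) r w\<bar>
       \<le> C * rho_nat r w / ((cosh (2*r))^2 - (cos (2*w))^2) powr (real (i + j) / 2)" .
  qed
qed

end
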